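(* Let $S \subseteq \mathbb{R}^n$ be nonempty, closed and convex, let $F = (F_1,\dots,F_m)^\top \colon S\to\mathbb{R}^m$ be continuous with each $F_i$ $\sigma_i$-convex for some $\sigma_i > 0$, and define $u_0(x) := \sup_{y \in S}\min_{i=1,\dots,m}\{F_i(x) - F_i(y)\}$, $x\in S$. Let $\sigma := \min_i \sigma_i$. Then \[ u_0(x) \ge \frac{\sigma}{2}\inf_{x^\ast\in X^\ast}\|x - x^\ast\|^2 \quad\text{for all } x \in S, \] where $X^\ast$ is the set of Pareto optimal solutions of $\min_{x\in S}F(x)$.
   Context: A function $h\colon S\to\mathbb{R}$ is $\sigma$-convex if $h(\alpha x + (1-\alpha)y) \le \alpha h(x) + (1-\alpha)h(y) - \frac{\alpha(1-\alpha)\sigma}{2}\|x-y\|^2$ for all $x,y\in S$, $\alpha\in[0,1]$. A point $x^\ast\in S$ is Pareto optimal if there is no $x\in S$ with $F_i(x)\le F_i(x^\ast)$ for all $i$ and $F(x)\ne F(x^\ast)$. *)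

theory Defs
  imports "HOL-Analysis.Analysis"
begin

definition sigma_convex_on :: "real \<Rightarrow> ('a::real_normed_vector) set \<Rightarrow> ('a \<Rightarrow> real) \<Rightarrow> bool" where
  "sigma_convex_on \<sigma> S h \<longleftrightarrow>
     (\<forall>x\<in>S. \<forall>y\<in>S. \<forall>\<alpha>::real. 0 \<le> \<alpha> \<and> \<alpha> \<le> 1 \<longrightarrow>
        h (\<alpha> *\<^sub>R x + (1 - \<alpha>) *\<^sub>R y)
          \<le> \<alpha> * h x + (1 - \<alpha>) * h y - \<alpha> * (1 - \<alpha>) * \<sigma> / 2 * (norm (x - y))\<^sup>2)"

definition pareto_optimal :: "'a set \<Rightarrow> nat \<Rightarrow> (nat \<Rightarrow> 'a \<Rightarrow> real) \<Rightarrow> 'a \<Rightarrow> bool" where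
  "pareto_optimal S m F xs \<longleftrightarrow> xs \<in> S \<and>
     \<not> (\<exists>x\<in>S. (\<forall>i\<in>{1..m}. F i x \<le> F i xs) \<and> (\<exists>i\<in>{1..m}. F i x \<noteq> F i xs))"

definition u0 :: "'a set \<Rightarrow> nat \<Rightarrow> (nat \<Rightarrow> 'a \<Rightarrow> real) \<Rightarrow> 'a \<Rightarrow> real" where
  "u0 S m F x = (SUP y\<in>S. Min ((\<lambda>i. F i x - F i y) ` {1..m}))"

end

theory Submission
  imports Defs
begin

lemma cont_Max_fin:
  fixes f :: "nat \<Rightarrow> 'a::topological_space \<Rightarrow> real"
  assumes "finite I" "I \<noteq> {}" "\<And>i. i \<in> I \<Longrightarrow> continuous_on K (f i)"
  shows "continuous_on K (\<lambda>y. Max ((\<lambda>i. f i y) ` I))"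
  using assms
proof (induction I rule: finite_ne_induct)
  case (singleton i)
  then show ?case by simp
next
  case (insert i A)
  have "(\<lambda>y. Max ((\<lambda>i. f i y) ` insert i A)) = (\<lambda>y. max (f i y) (Max ((\<lambda>i. f i y) ` A)))"
    using insert by (simp add: Max_insert)
  then show ?case using insert by (auto intro!: continuous_on_max)
qed

theorem corollary6p3:
  fixes S :: "(real ^ 'n) set" and m :: nat and F :: "nat \<Rightarrow> real ^ 'n \<Rightarrow> real"
    and \<sigma>s :: "nat \<Rightarrow> real" and x :: "real ^ 'n"
  assumes "S \<noteq> {}" and "closed S" and "convex S"
    and "m \<ge> 1"
    and "\<And>i. i \<in> {1..m} \<Longrightarrow> continuous_on S (F i)"
    and "\<And>i. i \<in> {1..m} \<Longrightarrow> \<sigma>s i > 0"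
    and "\<And>i. i \<in> {1..m} \<Longrightarrow> sigma_convex_on (\<sigma>s i) S (F i)"
    and "x \<in> S"
  shows "u0 S m F x \<ge> (Min (\<sigma>s ` {1..m})) / 2 *
           (INF xs\<in>{xs. pareto_optimal S m F xs}. (norm (x - xs))\<^sup>2)"
proof -
  let ?I = "{1..m}"
  have finI: "finite ?I" and neI: "?I \<noteq> {}" using assms(4) by auto
  have one: "1 \<in> ?I" using assms(4) by auto
  define \<sigma> where "\<sigma> = Min (\<sigma>s ` ?I)"
  have sig_pos: "\<sigma> > 0" unfolding \<sigma>_def using finI neI assms(6) by auto
  have sig_le: "\<sigma> \<le> \<sigma>s i" if "i \<in> ?I" for i unfolding \<sigma>_def using finI that by auto
  have sc: "F i (a *\<^sub>R y + (1 - a) *\<^sub>R z) \<le> a * F i y + (1 - a) * F i z - a * (1 - a) * \<sigma>s i / 2 * (norm (y - z))\<^sup>2"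
    if "i \<in> ?I" "y \<in> S" "z \<in> S" "0 \<le> a" "a \<le> 1" for i y z a
    using assms(7)[OF that(1)] that unfolding sigma_convex_on_def by blast
  define g where "g y = Max ((\<lambda>i. F i y - F i x) ` ?I)" for y
  have g_le: "g y \<le> c \<longleftrightarrow> (\<forall>i\<in>?I. F i y - F i x \<le> c)" for y c
    unfolding g_def using finI neI by simp
  have g_ge: "F i y - F i x \<le> g y" if "i \<in> ?I" for i y
    using g_le that by blast
  have gx: "g x = 0"
    unfolding g_def using finI neI by simp
  define K where "K = {y\<in>S. \<forall>i\<in>?I. F i y \<le> F i x}"
  have xK: "x \<in> K" unfolding K_def using assms(8) by auto
  have KS: "K \<subseteq> S" unfolding K_def by auto
  have closedK: "closed K"
  proof -
    have "K = S \<inter> (\<Inter>i\<in>?I. S \<inter> F i -` {..F i x})" unfolding K_def using neI by auto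
    moreover have "closed (S \<inter> F i -` {..F i x})" if "i \<in> ?I" for i
      using continuous_closed_preimage[OF assms(5)[OF that] assms(2)] by auto
    hence "closed (S \<inter> (\<Inter>i\<in>?I. S \<inter> F i -` {..F i x}))"
      using assms(2) by (intro closed_Int closed_INT) auto
    ultimately show ?thesis by simp
  qed
  define C where "C = S \<inter> cball x 1"
  have cC: "compact C" unfolding C_def using assms(2) by (simp add: compact_Int_closed closed_Int_compact)
  have neC: "C \<noteq> {}" using assms(8) unfolding C_def by auto
  have coC: "continuous_on C (F 1)" using assms(5)[OF one] unfolding C_def
    by (rule continuous_on_subset) auto
  obtain c0 where c0: "c0 \<in> C" "\<And>z. z \<in> C \<Longrightarrow> F 1 c0 \<le> F 1 z"
    using continuous_attains_inf[OF cC neC coC] by blast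
  define B where "B = F 1 c0"
  define s1 where "s1 = \<sigma>s 1"
  have s1: "s1 > 0" unfolding s1_def using assms(6)[OF one] .
  define R where "R = 1 + 2 * (F 1 x - B) / s1"
  have Kbd: "norm (y - x) \<le> max 1 R" if "y \<in> K" for y
  proof (rule ccontr)
    assume "\<not> ?thesis"
    hence r1: "norm (y - x) > 1" and rR: "norm (y - x) > R" by auto
    define r where "r = norm (y - x)"
    have rpos: "r > 0" using r1 r_def by auto
    define a where "a = 1 / r"
    have a01: "0 \<le> a" "a \<le> 1" unfolding a_def using r1 r_def by (auto simp: divide_le_eq_1)
    define z where "z = a *\<^sub>R y + (1 - a) *\<^sub>R x"
    have yS: "y \<in> S" using that KS by auto
    have zS: "z \<in> S" unfolding z_def using convexD[OF assms(3) yS assms(8)] a01 by auto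
    have "z - x = a *\<^sub>R (y - x)" unfolding z_def by (simp add: algebra_simps)
    hence "norm (z - x) = a * r" unfolding r_def using a01 by simp
    hence "norm (z - x) = 1" unfolding a_def using rpos by simp
    hence "z \<in> C" unfolding C_def using zS by (simp add: dist_norm norm_minus_commute)
    hence Bz: "B \<le> F 1 z" unfolding B_def using c0 by auto
    have st1: "F 1 z \<le> a * F 1 y + (1 - a) * F 1 x - a * (1 - a) * s1 / 2 * r\<^sup>2"
      unfolding z_def s1_def r_def using sc[OF one yS assms(8) a01] by simp
    have "F 1 y \<le> F 1 x" using that one unfolding K_def by auto
    hence st2: "a * F 1 y \<le> a * F 1 x" using a01 by (intro mult_left_mono) auto
    have E: "a * (1 - a) * r\<^sup>2 = r - 1" unfolding a_def using rpos
      by (simp add: field_simps power2_eq_square)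
    have "a * (1 - a) * s1 / 2 * r\<^sup>2 = s1 / 2 * (a * (1 - a) * r\<^sup>2)" by (simp add: field_simps)
    hence E2: "a * (1 - a) * s1 / 2 * r\<^sup>2 = s1 / 2 * (r - 1)" using E by simp
    have E3: "a * F 1 x + (1 - a) * F 1 x = F 1 x" by (simp add: algebra_simps)
    have "B \<le> F 1 x - s1 / 2 * (r - 1)" using Bz st1 st2 E2 E3 by linarith
    hence "s1 * (r - 1) \<le> 2 * (F 1 x - B)" by (simp add: field_simps)
    hence "r - 1 \<le> 2 * (F 1 x - B) / s1" using s1 by (simp add: field_simps)
    thus False using rR unfolding R_def r_def by linarith
  qed
  have "bounded K"
  proof (rule bounded_subset[OF bounded_cball[of x "max 1 R"]])
    show "K \<subseteq> cball x (max 1 R)"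
      using Kbd by (auto simp: dist_norm norm_minus_commute)
  qed
  hence compK: "compact K" using closedK by (simp add: compact_eq_bounded_closed)
  have contg: "continuous_on K g" unfolding g_def
    by (rule cont_Max_fin[OF finI neI]) (auto intro!: continuous_intros continuous_on_subset[OF assms(5) KS])
  obtain xs where xsK: "xs \<in> K" and xsmin: "\<And>y. y \<in> K \<Longrightarrow> g xs \<le> g y"
    using continuous_attains_inf[OF compK _ contg] xK by blast
  have xsS: "xs \<in> S" using xsK KS by auto
  have gxs0: "g xs \<le> 0" using xsmin[OF xK] gx by simp
  have gmin: "g xs \<le> g y" if yS: "y \<in> S" for y
  proof (cases "y \<in> K")
    case True then show ?thesis using xsmin by auto
  next
    case False
    then obtain i where "i \<in> ?I" "F i y > F i x" unfolding K_def using yS by auto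
    hence "g y > 0" using g_ge[of i y] by auto
    thus ?thesis using gxs0 by auto
  qed
  have pareto: "pareto_optimal S m F xs"
    unfolding pareto_optimal_def
  proof (intro conjI xsS notI)
    assume "\<exists>z\<in>S. (\<forall>i\<in>?I. F i z \<le> F i xs) \<and> (\<exists>i\<in>?I. F i z \<noteq> F i xs)"
    then obtain z where zS: "z \<in> S" and dom: "\<forall>i\<in>?I. F i z \<le> F i xs"
      and ne: "\<exists>i\<in>?I. F i z \<noteq> F i xs" by blast
    have "z \<noteq> xs" using ne by auto
    hence dpos: "(norm (z - xs))\<^sup>2 > 0" by simp
    define w where "w = (1/2::real) *\<^sub>R z + (1 - 1/2) *\<^sub>R xs"
    have wS: "w \<in> S" unfolding w_def using convexD[OF assms(3) zS xsS] by auto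
    have "F i w - F i x < g xs" if i: "i \<in> ?I" for i
    proof -
      have "F i w \<le> 1/2 * F i z + (1 - 1/2) * F i xs - 1/2 * (1 - 1/2) * \<sigma>s i / 2 * (norm (z - xs))\<^sup>2"
        unfolding w_def using sc[OF i zS xsS, of "1/2"] by simp
      moreover have "\<sigma>s i * (norm (z - xs))\<^sup>2 > 0" using assms(6)[OF i] dpos by simp
      moreover have "F i z \<le> F i xs" using dom i by auto
      ultimately have "F i w < F i xs" by (simp add: field_simps)
      thus ?thesis using g_ge[OF i, of xs] by linarith
    qed
    hence "g w < g xs" unfolding g_def using finI neI by simp
    thus False using gmin[OF wS] by simp
  qed
  define h where "h = - g xs"
  define c where "c = \<sigma> / 2 * (norm (x - xs))\<^sup>2"
  have hc_step: "h \<ge> c - a * c" if a: "0 < a" "a < 1" for a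
  proof -
    define w where "w = a *\<^sub>R x + (1 - a) *\<^sub>R xs"
    have wS: "w \<in> S" unfolding w_def using convexD[OF assms(3) assms(8) xsS] a by auto
    have "F i w - F i x \<le> (1 - a) * g xs - a * (1 - a) * \<sigma> / 2 * (norm (x - xs))\<^sup>2" if i: "i \<in> ?I" for i
    proof -
      have "F i w \<le> a * F i x + (1 - a) * F i xs - a * (1 - a) * \<sigma>s i / 2 * (norm (x - xs))\<^sup>2"
        unfolding w_def using sc[OF i assms(8) xsS, of a] a by simp
      moreover have "(1 - a) * (F i xs - F i x) \<le> (1 - a) * g xs"
        using g_ge[OF i, of xs] a by (intro mult_left_mono) auto
      moreover have "a * (1 - a) * \<sigma> / 2 * (norm (x - xs))\<^sup>2 \<le> a * (1 - a) * \<sigma>s i / 2 * (norm (x - xs))\<^sup>2"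
        using sig_le[OF i] a by (intro mult_right_mono divide_right_mono mult_left_mono) auto
      moreover have "a * F i x + (1 - a) * F i xs - F i x = (1 - a) * (F i xs - F i x)"
        by (simp add: algebra_simps)
      ultimately show ?thesis by linarith
    qed
    hence "g w \<le> (1 - a) * g xs - a * (1 - a) * \<sigma> / 2 * (norm (x - xs))\<^sup>2"
      using g_le by blast
    moreover have "g xs \<le> g w" using gmin[OF wS] .
    moreover have "(1 - a) * g xs - a * (1 - a) * \<sigma> / 2 * (norm (x - xs))\<^sup>2 = g xs - a * g xs - a * ((1 - a) * c)"
      unfolding c_def by (simp add: algebra_simps)
    ultimately have "a * g xs \<le> - a * ((1 - a) * c)" by linarith
    hence "a * (g xs + (1 - a) * c) \<le> 0" by (simp add: algebra_simps)
    hence "g xs + (1 - a) * c \<le> 0" using a by (simp add: mult_le_0_iff)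
    thus ?thesis unfolding h_def by (simp add: algebra_simps)
  qed
  have c0': "c \<ge> 0" unfolding c_def using sig_pos by simp
  have h0: "h \<ge> 0" unfolding h_def using gxs0 by simp
  have hc: "c \<le> h"
  proof (rule ccontr)
    assume "\<not> c \<le> h"
    hence ch: "c > h" by simp
    hence cpos: "c > 0" using h0 by simp
    define a where "a = (c - h) / (2 * c)"
    have a: "0 < a" "a < 1" unfolding a_def using ch cpos h0 by (auto simp: field_simps)
    have "a * c = (c - h) / 2" unfolding a_def using cpos by (simp add: field_simps)
    hence "c - a * c = (c + h) / 2" by simp
    moreover have "c - a * c \<le> h" using hc_step[OF a] .
    ultimately have "c + h \<le> 2 * h" by simp
    thus False using ch by simp
  qed
  have Min_ge: "h \<le> Min ((\<lambda>i. F i x - F i xs) ` ?I)"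
    unfolding h_def using finI neI
  proof (subst Min_ge_iff)
    show "\<forall>a\<in>(\<lambda>i. F i x - F i xs) ` ?I. - g xs \<le> a" using g_ge[of _ xs] by force
  qed auto
  have Min_le: "Min ((\<lambda>i. F i x - F i y) ` ?I) \<le> h" if y: "y \<in> S" for y
  proof -
    have "g y \<in> (\<lambda>i. F i y - F i x) ` ?I"
      unfolding g_def using Max_in[of "(\<lambda>i. F i y - F i x) ` ?I"] finI neI by blast
    then obtain i where i: "i \<in> ?I" "g y = F i y - F i x" by blast
    have "Min ((\<lambda>i. F i x - F i y) ` ?I) \<le> F i x - F i y" using finI i by simp
    thus ?thesis using i gmin[OF y] unfolding h_def by linarith
  qed
  have bdd: "bdd_above ((\<lambda>y. Min ((\<lambda>i. F i x - F i y) ` ?I)) ` S)"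
    by (rule bdd_aboveI2[where M=h]) (rule Min_le)
  have "h \<le> u0 S m F x"
    unfolding u0_def
    by (rule order_trans[OF Min_ge], rule cSUP_upper[OF xsS bdd])
  moreover have "(INF xs\<in>{xs. pareto_optimal S m F xs}. (norm (x - xs))\<^sup>2) \<le> (norm (x - xs))\<^sup>2"
    by (rule cINF_lower) (use pareto in \<open>auto intro: bdd_belowI2[where m=0]\<close>)
  hence "\<sigma> / 2 * (INF xs\<in>{xs. pareto_optimal S m F xs}. (norm (x - xs))\<^sup>2) \<le> c"
    unfolding c_def using sig_pos by (intro mult_left_mono) auto
  ultimately show ?thesis unfolding \<sigma>_def[symmetric] using hc by linarith
qed

end
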